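(* Let $R$ be a commutative Bézout ring such that for every $a\in R\setminus J(R)$ the set $Z(a)$ of maximal ideals of $R$ containing $a$ is finite. Then $R$ is strongly completable: for every $n\ge 2$ and all $a_1,\dots,a_n,d\in R$ with $a_1R+\cdots+a_nR=dR$, there is an $n\times n$ matrix over $R$ with first row $(a_1,\dots,a_n)$ and determinant $d$.
   Context: All rings are commutative with identity; $J(R)$ denotes the Jacobson radical. A ring is Bézout if every finitely generated ideal is principal. *)

theory Defs
  imports Main "Jordan_Normal_Form.Determinant"
begin

definition is_ideal :: "'a::comm_ring_1 set \<Rightarrow> bool" where
  "is_ideal I \<longleftrightarrow> 0 \<in> I \<and> (\<forall>x\<in>I. \<forall>y\<in>I. x + y \<in> I) \<and> (\<forall>r. \<forall>x\<in>I. r * x \<in> I)"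

definition ideal_gen :: "'a::comm_ring_1 set \<Rightarrow> 'a set" where
  "ideal_gen S = \<Inter>{I. is_ideal I \<and> S \<subseteq> I}"

definition maximal_ideal :: "'a::comm_ring_1 set \<Rightarrow> bool" where
  "maximal_ideal M \<longleftrightarrow> is_ideal M \<and> M \<noteq> UNIV \<and>
     (\<forall>I. is_ideal I \<and> M \<subseteq> I \<longrightarrow> I = M \<or> I = UNIV)"

definition jacobson :: "'a::comm_ring_1 set" where
  "jacobson = \<Inter>{M. maximal_ideal M}"

definition Zmax :: "'a::comm_ring_1 \<Rightarrow> 'a set set" where
  "Zmax a = {M. maximal_ideal M \<and> a \<in> M}"

definition bezout_ring :: "'a::comm_ring_1 itself \<Rightarrow> bool" where
  "bezout_ring _ \<longleftrightarrow> (\<forall>S::'a set. finite S \<longrightarrow> (\<exists>d. ideal_gen S = ideal_gen {d}))"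

end

theory Submission imports Defs begin

lemma ext_step:
  fixes B :: "'a::comm_ring_1 mat" and u v p q :: 'a
  assumes B: "B \<in> carrier_mat (Suc k) (Suc k)"
  defines "A \<equiv> mat (Suc (Suc k)) (Suc (Suc k)) (\<lambda>(i,j). if i < Suc k then
      (if j < k then B$$(i,j) else if j = k then B$$(i,k)*u else B$$(i,k)*v)
      else (if j < k then 0 else if j = k then -q else p))"
  shows "det A = (u*p+v*q) * det B"
proof -
  have dm: "det (transpose_mat (multrow k w (transpose_mat B))) = w * det B" for w
  proof -
    have T: "transpose_mat B \<in> carrier_mat (Suc k) (Suc k)" using B by auto
    have M: "multrow k w (transpose_mat B) \<in> carrier_mat (Suc k) (Suc k)" using T by auto
    show ?thesis using det_transpose[OF M] det_multrow[OF _ T, of k w] det_transpose[OF B] by simp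
  qed
  have A: "A \<in> carrier_mat (Suc (Suc k)) (Suc (Suc k))" unfolding A_def by auto
  have "det A = (\<Sum>j<Suc (Suc k). A $$ (Suc k,j) * cofactor A (Suc k) j)"
    by (rule laplace_expansion_row[OF A], simp)
  also have "\<dots> = A $$ (Suc k, Suc k) * cofactor A (Suc k) (Suc k) + A $$ (Suc k, k) * cofactor A (Suc k) k
     + (\<Sum>j<k. A $$ (Suc k,j) * cofactor A (Suc k) j)"
    by (simp add: lessThan_Suc add.assoc)
  also have "(\<Sum>j<k. A $$ (Suc k,j) * cofactor A (Suc k) j) = 0"
    by (rule sum.neutral, auto simp: A_def)
  also have "mat_delete A (Suc k) k = transpose_mat (multrow k v (transpose_mat B))"
    by (rule eq_matI, insert B, auto simp: A_def mat_delete_def mat_multrow_def)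
  hence c1: "cofactor A (Suc k) k = - (v * det B)"
    unfolding cofactor_def
    using dm[of v]
    by (simp add: power_add)
  also have "mat_delete A (Suc k) (Suc k) = transpose_mat (multrow k u (transpose_mat B))"
    by (rule eq_matI, insert B, auto simp: A_def mat_delete_def mat_multrow_def)
  hence c2: "cofactor A (Suc k) (Suc k) = u * det B"
    unfolding cofactor_def
    using dm[of u]
    by (simp add: power_add)
  finally show ?thesis using c1 c2 by (simp add: A_def algebra_simps)
qed

lemma ideal_mult: "is_ideal I \<Longrightarrow> x \<in> I \<Longrightarrow> r * x \<in> I"
  unfolding is_ideal_def by auto
lemma ideal_mult2: "is_ideal I \<Longrightarrow> x \<in> I \<Longrightarrow> x * r \<in> I"
  unfolding is_ideal_def by (metis mult.commute)
lemma ideal_add: "is_ideal I \<Longrightarrow> x \<in> I \<Longrightarrow> y \<in> I \<Longrightarrow> x + y \<in> I"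
  unfolding is_ideal_def by auto
lemma ideal_neg: "is_ideal I \<Longrightarrow> x \<in> I \<Longrightarrow> - x \<in> I"
  using ideal_mult[of I x "-1"] by simp
lemma ideal_diff: "is_ideal I \<Longrightarrow> x \<in> I \<Longrightarrow> y \<in> I \<Longrightarrow> x - y \<in> I"
  using ideal_add[of I x "-y"] ideal_neg[of I y] by simp
lemma ideal_one: "is_ideal I \<Longrightarrow> (1::'a::comm_ring_1) \<in> I \<Longrightarrow> I = UNIV"
  using ideal_mult[of I 1] by auto
lemma maximal_props: "maximal_ideal M \<Longrightarrow> is_ideal M \<and> (1::'a::comm_ring_1) \<notin> M"
  unfolding maximal_ideal_def using ideal_one by blast

definition lc2 :: "'a::comm_ring_1 \<Rightarrow> 'a \<Rightarrow> 'a set" where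
  "lc2 a b = {a*x+b*y | x y. True}"

lemma lc2_ideal: "is_ideal (lc2 a b)"
  unfolding is_ideal_def
proof (intro conjI ballI allI)
  show "0 \<in> lc2 a b" unfolding lc2_def by (rule CollectI, rule exI[of _ 0], rule exI[of _ 0], simp)
next
  fix x y assume "x \<in> lc2 a b" "y \<in> lc2 a b"
  then obtain x1 y1 x2 y2 where "x = a*x1+b*y1" "y = a*x2+b*y2" unfolding lc2_def by blast
  then have "x + y = a*(x1+x2) + b*(y1+y2)" by (simp add: algebra_simps)
  then show "x + y \<in> lc2 a b" unfolding lc2_def by blast
next
  fix r x assume "x \<in> lc2 a b"
  then obtain x1 y1 where "x = a*x1+b*y1" unfolding lc2_def by blast
  then have "r * x = a*(r*x1) + b*(r*y1)" by (simp add: algebra_simps)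
  then show "r * x \<in> lc2 a b" unfolding lc2_def by blast
qed

lemma lc2_mem: "a*x+b*y \<in> lc2 a b" unfolding lc2_def by blast

lemma ideal_gen_eq: "is_ideal I \<Longrightarrow> S \<subseteq> I \<Longrightarrow> (\<And>J. is_ideal J \<Longrightarrow> S \<subseteq> J \<Longrightarrow> I \<subseteq> J) \<Longrightarrow> ideal_gen S = I"
  unfolding ideal_gen_def by blast

lemma ideal_gen_2: "ideal_gen {a, b} = lc2 a b"
proof (rule ideal_gen_eq[OF lc2_ideal])
  show "{a, b} \<subseteq> lc2 a b" using lc2_mem[of a 1 b 0] lc2_mem[of a 0 b 1] by simp
  fix J assume J: "is_ideal J" "{a, b} \<subseteq> J"
  show "lc2 a b \<subseteq> J" unfolding lc2_def
    using J ideal_add ideal_mult2 by fastforce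
qed

lemma ideal_gen_1: "ideal_gen {d} = lc2 d 0"
proof (rule ideal_gen_eq[OF lc2_ideal])
  show "{d} \<subseteq> lc2 d 0" using lc2_mem[of d 1 0 0] by simp
  fix J assume J: "is_ideal J" "{d} \<subseteq> J"
  show "lc2 d 0 \<subseteq> J" unfolding lc2_def
    using J ideal_mult2 by fastforce
qed

lemma exists_maximal:
  assumes I: "is_ideal I" and one: "(1::'a::comm_ring_1) \<notin> I"
  shows "\<exists>M. maximal_ideal M \<and> I \<subseteq> M"
proof -
  let ?A = "{J. is_ideal J \<and> I \<subseteq> J \<and> (1::'a) \<notin> J}"
  have "\<exists>M\<in>?A. \<forall>X\<in>?A. M \<subseteq> X \<longrightarrow> X = M"
  proof (rule subset_Zorn_nonempty)
    show "?A \<noteq> {}" using I one by blast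
    fix C assume ne: "C \<noteq> {}" and ch: "subset.chain ?A C"
    have sub: "C \<subseteq> ?A" and cmp: "\<And>X Y. X \<in> C \<Longrightarrow> Y \<in> C \<Longrightarrow> X \<subseteq> Y \<or> Y \<subseteq> X"
      using ch unfolding subset.chain_def by auto
    have "is_ideal (\<Union>C)"
      unfolding is_ideal_def
    proof (intro conjI ballI allI)
      obtain X where "X \<in> C" using ne by blast
      then show "0 \<in> \<Union>C" using sub unfolding is_ideal_def by blast
    next
      fix x y assume "x \<in> \<Union>C" "y \<in> \<Union>C"
      then obtain X Y where XY: "X \<in> C" "Y \<in> C" "x \<in> X" "y \<in> Y" by blast
      show "x + y \<in> \<Union>C"
      proof (cases "X \<subseteq> Y")
        case True then show ?thesis using XY sub ideal_add[of Y x y] by blast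
      next
        case False then have "Y \<subseteq> X" using cmp XY by blast
        then show ?thesis using XY sub ideal_add[of X x y] by blast
      qed
    next
      fix r x assume "x \<in> \<Union>C"
      then show "r * x \<in> \<Union>C" using sub ideal_mult by blast
    qed
    then show "\<Union>C \<in> ?A" using ne sub by blast
  qed
  then obtain M where M: "M \<in> ?A" and mx: "\<forall>X\<in>?A. M \<subseteq> X \<longrightarrow> X = M" by blast
  have "maximal_ideal M"
    unfolding maximal_ideal_def
  proof (intro conjI allI impI)
    show "is_ideal M" using M by blast
    show "M \<noteq> UNIV" using M by blast
    fix J assume J: "is_ideal J \<and> M \<subseteq> J"
    show "J = M \<or> J = UNIV"
    proof (cases "(1::'a) \<in> J")
      case True then show ?thesis using ideal_one J by blast
    next
      case False then show ?thesis using mx J M by blast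
    qed
  qed
  then show ?thesis using M by blast
qed

lemma max_sep2:
  assumes M: "maximal_ideal M" and N: "maximal_ideal N" and ne: "M \<noteq> N"
  shows "\<exists>m\<in>M. (1::'a::comm_ring_1) - m \<in> N"
proof -
  define K where "K = {z. \<exists>m n. z = m + n \<and> m \<in> M \<and> n \<in> N}"
  have iM: "is_ideal M" and iN: "is_ideal N" using M N maximal_props by blast+
  have M0: "0 \<in> M" and N0: "0 \<in> N" using iM iN unfolding is_ideal_def by blast+
  have K: "is_ideal K"
    unfolding is_ideal_def
  proof (intro conjI ballI allI)
    have "(0::'a) = 0 + 0 \<and> 0 \<in> M \<and> 0 \<in> N" using M0 N0 by simp
    then show "0 \<in> K" unfolding K_def by blast
  next
    fix x y assume "x \<in> K" "y \<in> K"
    then obtain m n m' n' where h: "x = m + n" "y = m' + n'" "m \<in> M" "n \<in> N" "m' \<in> M" "n' \<in> N"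
      unfolding K_def by blast
    have "x + y = (m + m') + (n + n') \<and> m + m' \<in> M \<and> n + n' \<in> N"
      using h ideal_add[OF iM h(3) h(5)] ideal_add[OF iN h(4) h(6)] by (simp add: algebra_simps)
    then show "x + y \<in> K" unfolding K_def by blast
  next
    fix r x assume "x \<in> K"
    then obtain m n where h: "x = m + n" "m \<in> M" "n \<in> N" unfolding K_def by blast
    have "r * x = r*m + r*n \<and> r*m \<in> M \<and> r*n \<in> N"
      using h ideal_mult[OF iM h(2)] ideal_mult[OF iN h(3)] by (simp add: distrib_left)
    then show "r * x \<in> K" unfolding K_def by blast
  qed
  have MK: "M \<subseteq> K"
  proof
    fix m assume "m \<in> M" then have "m = m + 0 \<and> m \<in> M \<and> 0 \<in> N" using N0 by simp
    then show "m \<in> K" unfolding K_def by blast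
  qed
  have NK: "N \<subseteq> K"
  proof
    fix n assume "n \<in> N" then have "n = 0 + n \<and> 0 \<in> M \<and> n \<in> N" using M0 by simp
    then show "n \<in> K" unfolding K_def by blast
  qed
  have "K = UNIV"
  proof (rule ccontr)
    assume "K \<noteq> UNIV"
    then have "K = M" using M K MK unfolding maximal_ideal_def by blast
    then have "N \<subseteq> M" using NK by blast
    then have "M = N \<or> M = UNIV" using N iM unfolding maximal_ideal_def by blast
    then show False using ne M unfolding maximal_ideal_def by blast
  qed
  then have "1 \<in> K" by simp
  then obtain m n where h: "1 = m + n" "m \<in> M" "n \<in> N" unfolding K_def by blast
  then have "1 - m = n" by (simp add: algebra_simps)
  then show ?thesis using h by blast
qed

lemma max_sep:
  assumes M: "maximal_ideal M"
  shows "finite F \<Longrightarrow> (\<forall>N\<in>F. maximal_ideal N) \<Longrightarrow> M \<notin> F \<Longrightarrow> \<exists>m\<in>M. \<forall>N\<in>F. (1::'a::comm_ring_1) - m \<in> N"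
proof (induction F rule: finite_induct)
  case empty
  show ?case using M maximal_props[of M] unfolding is_ideal_def by blast
next
  case (insert N F)
  then obtain m where m: "m \<in> M" "\<forall>N\<in>F. 1 - m \<in> N" by auto
  obtain m' where m': "m' \<in> M" "1 - m' \<in> N" using max_sep2[OF M, of N] insert by auto
  have iM: "is_ideal M" using M maximal_props by blast
  have eq: "1 - (m + m' - m*m') = (1-m)*(1-m')" by (simp add: algebra_simps)
  have "m + m' - m*m' \<in> M" using ideal_diff[OF iM ideal_add[OF iM m(1) m'(1)] ideal_mult[OF iM m'(1)]] .
  moreover have "\<forall>N'\<in>insert N F. 1 - (m + m' - m*m') \<in> N'"
    unfolding eq
  proof
    fix N' assume N': "N' \<in> insert N F"
    have iN': "is_ideal N'" using N' insert.prems maximal_props by blast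
    show "(1 - m) * (1 - m') \<in> N'"
    proof (cases "N' = N")
      case True show ?thesis by (rule ideal_mult[OF iN' m'(2)[folded True]])
    next
      case False then have "N' \<in> F" using N' by blast
      then show ?thesis using ideal_mult2[OF iN' m(2)[rule_format]] by blast
    qed
  qed
  ultimately show ?case by (rule bexI[rotated])
qed

lemma crt:
  shows "finite A \<Longrightarrow> finite B \<Longrightarrow> (\<forall>M\<in>A. maximal_ideal M) \<Longrightarrow> (\<forall>N\<in>B. maximal_ideal N) \<Longrightarrow> A \<inter> B = {} \<Longrightarrow>
    \<exists>s::'a::comm_ring_1. (\<forall>M\<in>A. s \<in> M) \<and> (\<forall>N\<in>B. 1 - s \<in> N)"
proof (induction A rule: finite_induct)
  case empty
  show ?case using maximal_props empty unfolding is_ideal_def by (intro exI[of _ 1]) auto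
next
  case (insert M A)
  then obtain s where s: "\<forall>M\<in>A. s \<in> M" "\<forall>N\<in>B. 1 - s \<in> N" by auto
  obtain m where m: "m \<in> M" "\<forall>N\<in>B. 1 - m \<in> N" using max_sep[of M B] insert by auto
  have eq: "1 - s*m = (1 - s) + s*(1-m)" by (simp add: algebra_simps)
  have "\<forall>M'\<in>insert M A. s*m \<in> M'"
  proof
    fix M' assume M': "M' \<in> insert M A"
    have iM': "is_ideal M'" using M' insert.prems maximal_props by blast
    show "s*m \<in> M'"
    proof (cases "M' = M")
      case True show ?thesis by (rule ideal_mult[OF iM' m(1)[folded True]])
    next
      case False then have "M' \<in> A" using M' by blast
      then show ?thesis using ideal_mult2[OF iM' s(1)[rule_format]] by blast
    qed
  qed
  moreover have "\<forall>N\<in>B. 1 - s*m \<in> N" unfolding eq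
  proof
    fix N assume N: "N \<in> B"
    have iN: "is_ideal N" using N insert.prems maximal_props by blast
    show "1 - s + s * (1 - m) \<in> N"
      using ideal_add[OF iN s(2)[rule_format, OF N] ideal_mult[OF iN m(2)[rule_format, OF N]]] .
  qed
  ultimately have "(\<forall>M'\<in>insert M A. s*m \<in> M') \<and> (\<forall>N\<in>B. 1 - s*m \<in> N)" by (rule conjI)
  then show ?case by (rule exI)
qed

lemma sr2:
  assumes fin: "\<And>a::'a::comm_ring_1. a \<notin> jacobson \<Longrightarrow> finite (Zmax a)"
    and eq: "u*x + v*y + w*z = (1::'a)"
  shows "\<exists>s t p q. (u + s*w)*p + (v+t*w)*q = 1"
proof (cases "u \<in> jacobson")
  case True
  have "(1::'a) \<in> lc2 v w"
  proof (rule ccontr)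
    assume "1 \<notin> lc2 v w"
    then obtain N where N: "maximal_ideal N" "lc2 v w \<subseteq> N" using exists_maximal[OF lc2_ideal] by blast
    have iN: "is_ideal N" using N maximal_props by blast
    have u: "u \<in> N" using True N unfolding jacobson_def by blast
    have v: "v \<in> N" using N(2) lc2_mem[of v 1 w 0] by auto
    have w: "w \<in> N" using N(2) lc2_mem[of v 0 w 1] by auto
    have "u*x + v*y + w*z \<in> N"
      by (rule ideal_add[OF iN ideal_add[OF iN ideal_mult2[OF iN u] ideal_mult2[OF iN v]] ideal_mult2[OF iN w]])
    then show False using eq N(1) maximal_props by auto
  qed
  then obtain x2 y2 where e: "v*x2 + w*y2 = 1" unfolding lc2_def by auto
  have "(u + (y2*(1-u))*w)*1 + (v + 0*w)*(x2*(1-u)) = u + (1-u)*(v*x2 + w*y2)"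
    by (simp add: algebra_simps)
  also have "\<dots> = 1" using e by simp
  finally show ?thesis by blast
next
  case False
  define F where "F = Zmax u"
  have fF: "finite F" using fin[OF False] F_def by simp
  have mF: "\<forall>N\<in>F. maximal_ideal N \<and> u \<in> N" unfolding F_def Zmax_def by blast
  obtain t where t: "\<forall>N\<in>{N\<in>F. v \<notin> N}. t \<in> N" "\<forall>N\<in>{N\<in>F. v \<in> N}. 1 - t \<in> N"
    using crt[of "{N\<in>F. v \<notin> N}" "{N\<in>F. v \<in> N}"] fF mF by auto
  have "(1::'a) \<in> lc2 u (v + t*w)"
  proof (rule ccontr)
    assume "1 \<notin> lc2 u (v + t*w)"
    then obtain N where N: "maximal_ideal N" "lc2 u (v + t*w) \<subseteq> N" using exists_maximal[OF lc2_ideal] by blast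
    have iN: "is_ideal N" using N maximal_props by blast
    have u: "u \<in> N" using N(2) lc2_mem[of u 1 "v + t*w" 0] by auto
    have vt: "v + t*w \<in> N" using N(2) lc2_mem[of u 0 "v + t*w" 1] by auto
    have NF: "N \<in> F" unfolding F_def Zmax_def using N u by blast
    show False
    proof (cases "v \<in> N")
      case True
      then have t1: "1 - t \<in> N" using t(2) NF by blast
      have "v + t*w - v + (1-t)*w \<in> N"
        by (rule ideal_add[OF iN ideal_diff[OF iN vt True] ideal_mult2[OF iN t1]])
      then have w: "w \<in> N" by (simp add: algebra_simps)
      have "u*x + v*y + w*z \<in> N"
        by (rule ideal_add[OF iN ideal_add[OF iN ideal_mult2[OF iN u] ideal_mult2[OF iN True]] ideal_mult2[OF iN w]])
      then show False using eq N(1) maximal_props by auto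
    next
      case False
      then have t0: "t \<in> N" using t(1) NF by blast
      have "v + t*w - t*w \<in> N"
        by (rule ideal_diff[OF iN vt ideal_mult2[OF iN t0]])
      then show False using False by simp
    qed
  qed
  then obtain p q where "u*p + (v + t*w)*q = 1" unfolding lc2_def by auto
  then have "(u + 0*w)*p + (v + t*w)*q = 1" by simp
  then show ?thesis by blast
qed

lemma hermite:
  assumes bez: "bezout_ring TYPE('a::comm_ring_1)"
    and fin: "\<And>a::'a. a \<notin> jacobson \<Longrightarrow> finite (Zmax a)"
  shows "\<exists>e u v p q. a = e*u \<and> b = e*v \<and> u*p + v*q = (1::'a)"
proof -
  have "finite {a,b}" by simp
  from bez[unfolded bezout_ring_def, rule_format, OF this]
  obtain d where "ideal_gen {a,b} = ideal_gen {d::'a}" by blast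
  then have L: "lc2 a b = lc2 d 0" by (simp add: ideal_gen_1 ideal_gen_2)
  have "a \<in> lc2 d 0" using L lc2_mem[of a 1 b 0] by auto
  then obtain a1 y1 where "a = d*a1 + 0*y1" unfolding lc2_def by auto
  then have a1: "a = d*a1" by simp
  have "b \<in> lc2 d 0" using L lc2_mem[of a 0 b 1] by auto
  then obtain b1 y2 where "b = d*b1 + 0*y2" unfolding lc2_def by auto
  then have b1: "b = d*b1" by simp
  have "d \<in> lc2 a b" using L lc2_mem[of d 1 0 0] by auto
  then obtain x y where xy: "d = a*x + b*y" unfolding lc2_def by auto
  define w where "w = 1 - (a1*x + b1*y)"
  have "d*w = d - ((d*a1)*x + (d*b1)*y)" unfolding w_def by (simp add: algebra_simps)
  also have "\<dots> = 0" using xy a1 b1 by simp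
  finally have dw: "d*w = 0" .
  have "a1*x + b1*y + w*1 = 1" unfolding w_def by simp
  from sr2[OF fin this] obtain s t p q where spq: "(a1 + s*w)*p + (b1+t*w)*q = 1" by blast
  have "d*(a1 + s*w) = d*a1 + s*(d*w)" by (simp add: algebra_simps)
  then have "a = d*(a1 + s*w)" using a1 dw by simp
  moreover have "d*(b1 + t*w) = d*b1 + t*(d*w)" by (simp add: algebra_simps)
  then have "b = d*(b1 + t*w)" using b1 dw by simp
  ultimately show ?thesis using spq by blast
qed


lemma complete:
  assumes key: "\<And>a b::'a::comm_ring_1. \<exists>e u v p q. a = e*u \<and> b = e*v \<and> u*p + v*q = 1"
  shows "\<forall>(a::nat \<Rightarrow> 'a) d r. d = (\<Sum>i<Suc (Suc m). a i * r i) \<longrightarrow>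
     (\<exists>A \<in> carrier_mat (Suc (Suc m)) (Suc (Suc m)). (\<forall>j<Suc (Suc m). A $$ (0, j) = a j) \<and> det A = d)"
proof (induction m)
  case 0
  show ?case
  proof (intro allI impI)
    fix a :: "nat \<Rightarrow> 'a" and d r assume d: "d = (\<Sum>i<Suc (Suc 0). a i * r i)"
    define B :: "'a mat" where "B = 1\<^sub>m 1"
    define A where "A = mat (Suc (Suc 0)) (Suc (Suc 0)) (\<lambda>(i,j). if i < Suc 0 then
      (if j < 0 then B$$(i,j) else if j = 0 then B$$(i,0)*a 0 else B$$(i,0)*a 1)
      else (if j < 0 then 0 else if j = 0 then - r 1 else r 0))"
    have B: "B \<in> carrier_mat (Suc 0) (Suc 0)" unfolding B_def by simp
    have "det A = (a 0 * r 0 + a 1 * r 1) * det B"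
      unfolding A_def by (rule ext_step[OF B])
    then have "det A = d" using d unfolding B_def by simp
    moreover have "A \<in> carrier_mat (Suc (Suc 0)) (Suc (Suc 0))" unfolding A_def by simp
    moreover have "\<forall>j<Suc (Suc 0). A $$ (0, j) = a j"
    proof (intro allI impI)
      fix j :: nat assume "j < Suc (Suc 0)"
      then have "j = 0 \<or> j = 1" by auto
      then show "A $$ (0, j) = a j" unfolding A_def B_def by auto
    qed
    ultimately show "\<exists>A \<in> carrier_mat (Suc (Suc 0)) (Suc (Suc 0)). (\<forall>j<Suc (Suc 0). A $$ (0, j) = a j) \<and> det A = d"
      by blast
  qed
next
  case (Suc m)
  define k where "k = Suc m"
  show ?case
  proof (intro allI impI)
    fix a :: "nat \<Rightarrow> 'a" and d r assume d: "d = (\<Sum>i<Suc (Suc (Suc m)). a i * r i)"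
    obtain e u v p q where euv: "a k = e*u" "a (Suc k) = e*v" "u*p + v*q = 1" using key by blast
    define a' where "a' = a(k := e)"
    define r' where "r' = r(k := u * r k + v * r (Suc k))"
    have s1: "(\<Sum>i<k. a' i * r' i) = (\<Sum>i<k. a i * r i)"
      by (rule sum.cong, auto simp: a'_def r'_def)
    have "d = (\<Sum>i<k. a i * r i) + a k * r k + a (Suc k) * r (Suc k)"
      using d unfolding k_def by (simp add: add.assoc)
    also have "\<dots> = (\<Sum>i<k. a' i * r' i) + a' k * r' k"
      unfolding s1 using euv by (simp add: a'_def r'_def algebra_simps)
    also have "\<dots> = (\<Sum>i<Suc (Suc m). a' i * r' i)" unfolding k_def by simp
    finally have d': "d = (\<Sum>i<Suc (Suc m). a' i * r' i)" .
    from Suc.IH[rule_format, OF d'] obtain B where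
      B: "B \<in> carrier_mat (Suc k) (Suc k)" and B0: "\<forall>j<Suc k. B $$ (0, j) = a' j" and dB: "det B = d"
      unfolding k_def by blast
    define A where "A = mat (Suc (Suc k)) (Suc (Suc k)) (\<lambda>(i,j). if i < Suc k then
      (if j < k then B$$(i,j) else if j = k then B$$(i,k)*u else B$$(i,k)*v)
      else (if j < k then 0 else if j = k then -q else p))"
    have "det A = (u*p+v*q) * det B" unfolding A_def by (rule ext_step[OF B])
    then have "det A = d" using euv dB by simp
    moreover have "A \<in> carrier_mat (Suc (Suc k)) (Suc (Suc k))" unfolding A_def by simp
    moreover have "\<forall>j<Suc (Suc k). A $$ (0, j) = a j"
    proof (intro allI impI)
      fix j :: nat assume j: "j < Suc (Suc k)"
      have Bk: "B $$ (0, k) = e" using B0 unfolding a'_def by simp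
      show "A $$ (0, j) = a j"
      proof (cases "j < k")
        case True then show ?thesis using B0 j unfolding A_def a'_def by auto
      next
        case False
        then have "j = k \<or> j = Suc k" using j by auto
        then show ?thesis using Bk euv unfolding A_def by auto
      qed
    qed
    ultimately show "\<exists>A \<in> carrier_mat (Suc (Suc (Suc m))) (Suc (Suc (Suc m))). (\<forall>j<Suc (Suc (Suc m)). A $$ (0, j) = a j) \<and> det A = d"
      unfolding k_def by blast
  qed
qed

theorem proposition4p7:
  assumes bez: "bezout_ring TYPE('a::comm_ring_1)"
    and fin: "\<And>a::'a. a \<notin> jacobson \<Longrightarrow> finite (Zmax a)"
  shows "\<forall>(n::nat) (a::nat \<Rightarrow> 'a) (d::'a). n \<ge> 2 \<longrightarrow>
           {(\<Sum>i<n. a i * r i) | r. True} = {d * r | r. True} \<longrightarrow>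
           (\<exists>A \<in> carrier_mat n n. (\<forall>j<n. A $$ (0, j) = a j) \<and> det A = d)"
proof (intro allI impI)
  fix n :: nat and a :: "nat \<Rightarrow> 'a" and d :: 'a
  assume n: "n \<ge> 2" and eq: "{(\<Sum>i<n. a i * r i) | r. True} = {d * r | r. True}"
  have "d \<in> {d * r | r. True}" by (rule CollectI, rule exI[of _ 1], simp)
  then obtain r where r: "d = (\<Sum>i<n. a i * r i)" using eq by blast
  obtain m where m: "n = Suc (Suc m)" using n by (metis add_2_eq_Suc le_Suc_ex)
  have key: "\<And>a b::'a. \<exists>e u v p q. a = e*u \<and> b = e*v \<and> u*p + v*q = 1"
    using hermite[OF bez fin] by blast
  show "\<exists>A \<in> carrier_mat n n. (\<forall>j<n. A $$ (0, j) = a j) \<and> det A = d"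
    using complete[OF key, of m, rule_format, OF r[unfolded m]] unfolding m .
qed

end
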